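(* Let $m>1$ be odd and let $\varphi:\mathbb{Z}_{2m}\to\{\pm1\}$ be a binary sequence of length $2m$. Define the binary $(2,m)$-array $\phi:\mathbb{Z}_2\times\mathbb{Z}_m\to\{\pm1\}$ as follows, where $a\in\{0,1\}$, $k$ is taken as an integer in $\{0,1,\ldots,m-1\}$, and arguments of $\varphi$ are read modulo $2m$. If $m\equiv 1 \pmod 4$: $\phi(a,k)=\varphi(k+am)$ if $k\equiv 0\pmod 4$; $\phi(a,k)=(-1)^{1-a}\varphi(k+(1-a)m)$ if $k\equiv 1\pmod 4$; $\phi(a,k)=-\varphi(k+am)$ if $k\equiv 2\pmod 4$; $\phi(a,k)=(-1)^{a}\varphi(k+(1-a)m)$ if $k\equiv 3\pmod 4$. If $m\equiv 3 \pmod 4$: $\phi(a,k)=(-1)^a\varphi(k+am)$ if $k\equiv 0\pmod 4$; $\phi(a,k)=\varphi(k+(1-a)m)$ if $k\equiv 1\pmod 4$; $\phi(a,k)=(-1)^{1-a}\varphi(k+am)$ if $k\equiv 2\pmod 4$; $\phi(a,k)=-\varphi(k+(1-a)m)$ if $k\equiv 3\pmod 4$. Then $\varphi$ is a GOBS if and only if $\phi$ is a GOBA$(2,m)$ of type $(1,0)$.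
   Context: For a finite abelian group $A$ (written additively) and a map $\psi:A\to\mathbb{C}$, the periodic autocorrelation is $R_\psi(x)=\sum_{b\in A}\psi(b)\overline{\psi(x+b)}$ for $x\in A$. Let $m$ be odd. A binary $(2,m)$-array is a map $\phi:\mathbb{Z}_2\times\mathbb{Z}_m\to\{\pm1\}$. Its expansion (with respect to type $(1,0)$) is $\phi':\mathbb{Z}_4\times\mathbb{Z}_m\to\{\pm1\}$ given by $\phi'(a,k)=\phi(a \bmod 2,k)$ for $a\in\{0,1\}$ and $\phi'(a,k)=-\phi(a\bmod 2,k)$ for $a\in\{2,3\}$. The array $\phi$ is a GOBA$(2,m)$ of type $(1,0)$ if $R_{\phi'}(x)\in\{0,4,-4\}$ for all $x\in(\mathbb{Z}_4\times\mathbb{Z}_m)\setminus\{(0,0),(2,0)\}$ and exactly $2m$ elements $x\in\mathbb{Z}_4\times\mathbb{Z}_m$ satisfy $R_{\phi'}(x)=0$. For a binary sequence $\varphi:\mathbb{Z}_{2m}\to\{\pm1\}$, its expansion is $\varphi':\mathbb{Z}_{4m}\to\{\pm1\}$ with $\varphi'(x)=\varphi(x\bmod 2m)$ for $x\in\{0,\ldots,2m-1\}$ and $\varphi'(x)=-\varphi(x\bmod 2m)$ for $x\in\{2m,\ldots,4m-1\}$. The sequence $\varphi$ is a GOBS (generalized optimal binary sequence) if $R_{\varphi'}(x)\in\{0,4,-4\}$ for all $x\in\mathbb{Z}_{4m}\setminus\{0,2m\}$ and exactly $2m$ elements $x\in\mathbb{Z}_{4m}$ satisfy $R_{\varphi'}(x)=0$.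 *)

theory Defs
  imports Complex_Main
begin

text \<open>Z_n is represented by {0..<n} with arithmetic mod n. Binary maps take values in {1,-1}
  as complex numbers.\<close>

definition binary_seq :: "nat \<Rightarrow> (nat \<Rightarrow> complex) \<Rightarrow> bool" where
  "binary_seq n f \<longleftrightarrow> (\<forall>x<n. f x \<in> {1, -1})"

definition autocorr_seq :: "nat \<Rightarrow> (nat \<Rightarrow> complex) \<Rightarrow> nat \<Rightarrow> complex" where
  "autocorr_seq n psi x = (\<Sum>b<n. psi b * cnj (psi ((x + b) mod n)))"

definition seq_expansion :: "nat \<Rightarrow> (nat \<Rightarrow> complex) \<Rightarrow> nat \<Rightarrow> complex" where
  "seq_expansion m f x = (if x < 2*m then f x else - f (x - 2*m))"

definition is_GOBS :: "nat \<Rightarrow> (nat \<Rightarrow> complex) \<Rightarrow> bool" where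
  "is_GOBS m f \<longleftrightarrow>
     (\<forall>x<4*m. x \<noteq> 0 \<and> x \<noteq> 2*m \<longrightarrow>
        autocorr_seq (4*m) (seq_expansion m f) x \<in> {0, 4, -4}) \<and>
     card {x. x < 4*m \<and> autocorr_seq (4*m) (seq_expansion m f) x = 0} = 2*m"

definition autocorr_arr :: "nat \<Rightarrow> nat \<Rightarrow> (nat \<Rightarrow> nat \<Rightarrow> complex) \<Rightarrow> nat \<Rightarrow> nat \<Rightarrow> complex" where
  "autocorr_arr r m psi x1 x2 =
     (\<Sum>b1<r. \<Sum>b2<m. psi b1 b2 * cnj (psi ((x1 + b1) mod r) ((x2 + b2) mod m)))"

text \<open>Expansion of a (2,m)-array with respect to type (1,0).\<close>
definition arr_expansion :: "(nat \<Rightarrow> nat \<Rightarrow> complex) \<Rightarrow> nat \<Rightarrow> nat \<Rightarrow> complex" where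
  "arr_expansion g a k = (if a < 2 then g a k else - g (a - 2) k)"

definition is_GOBA_2m_10 :: "nat \<Rightarrow> (nat \<Rightarrow> nat \<Rightarrow> complex) \<Rightarrow> bool" where
  "is_GOBA_2m_10 m g \<longleftrightarrow>
     (\<forall>x1<4. \<forall>x2<m. (x1, x2) \<notin> {(0,0), (2,0)} \<longrightarrow>
        autocorr_arr 4 m (arr_expansion g) x1 x2 \<in> {0, 4, -4}) \<and>
     card {(x1, x2). x1 < 4 \<and> x2 < m \<and> autocorr_arr 4 m (arr_expansion g) x1 x2 = 0} = 2*m"

definition arr_of_seq :: "nat \<Rightarrow> (nat \<Rightarrow> complex) \<Rightarrow> nat \<Rightarrow> nat \<Rightarrow> complex" where
  "arr_of_seq m f a k =
    (let A = f ((k + a*m) mod (2*m)); B = f ((k + (1 - a)*m) mod (2*m)) in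
     if m mod 4 = 1 then
       (if k mod 4 = 0 then A
        else if k mod 4 = 1 then (-1) ^ (1 - a) * B
        else if k mod 4 = 2 then - A
        else (-1) ^ a * B)
     else
       (if k mod 4 = 0 then (-1) ^ a * A
        else if k mod 4 = 1 then B
        else if k mod 4 = 2 then (-1) ^ (1 - a) * A
        else - B))"

end

theory Submission
  imports Defs "HOL-Number_Theory.Cong"
begin

lemma key:
  fixes m k j :: nat and f :: "nat \<Rightarrow> complex"
  assumes "odd m" "k < m" "j < 4"
  shows "arr_expansion (arr_of_seq m f) ((k + j*m) mod 4) k = seq_expansion m f (k + j*m)"
proof -
  have h4: "(k + j*m) mod 4 = (k mod 4 + j*(m mod 4)) mod 4"
    by (metis mod_add_left_eq mod_add_right_eq mod_mult_right_eq)
  have m4: "m mod 4 = 1 \<or> m mod 4 = 3" using assms(1) by presburger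
  have k4: "k mod 4 = 0 \<or> k mod 4 = 1 \<or> k mod 4 = 2 \<or> k mod 4 = 3" by presburger
  have j4: "j = 0 \<or> j = 1 \<or> j = 2 \<or> j = 3" using assms(3) by auto
  have e0: "k mod (2*m) = k" using assms by simp
  have e1: "(k + m) mod (2*m) = k + m" using assms by simp
  have s2: "seq_expansion m f (k + 2*m) = - f k" unfolding seq_expansion_def by simp
  have s3: "seq_expansion m f (k + 3*m) = - f (k+m)" unfolding seq_expansion_def by (simp add: add.commute)
  have s0: "seq_expansion m f k = f k" unfolding seq_expansion_def using assms by simp
  have s1: "seq_expansion m f (k + m) = f (k+m)" unfolding seq_expansion_def using assms by (simp add: add.commute)
  from m4 k4 j4 show ?thesis
    unfolding h4
    by (elim disjE) (simp_all add: arr_expansion_def arr_of_seq_def Let_def e0 e1 s0 s1 s2 s3)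
qed

lemma key2:
  fixes m x :: nat and f :: "nat \<Rightarrow> complex"
  assumes "odd m" "x < 4*m"
  shows "arr_expansion (arr_of_seq m f) (x mod 4) (x mod m) = seq_expansion m f x"
proof -
  have mpos: "m > 0" using assms odd_pos by auto
  have x: "x = x mod m + (x div m) * m" by simp
  have "x div m < 4" using assms mpos by (simp add: less_mult_imp_div_less)
  then have "arr_expansion (arr_of_seq m f) ((x mod m + (x div m)*m) mod 4) (x mod m)
     = seq_expansion m f (x mod m + (x div m)*m)"
    using key[OF assms(1), of "x mod m" "x div m" f] mpos by simp
  then show ?thesis using x by metis
qed

definition tau :: "nat \<Rightarrow> nat \<Rightarrow> nat \<times> nat" where
  "tau m x = (x mod 4, x mod m)"

lemma tau_inj:
  assumes "odd m"
  shows "inj_on (tau m) {..<4*m}"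
proof
  fix x y assume x: "x \<in> {..<4*m}" and y: "y \<in> {..<4*m}" and e: "tau m x = tau m y"
  have c1: "[x = y] (mod 4)" using e by (simp add: tau_def cong_def)
  have c2: "[x = y] (mod m)" using e by (simp add: tau_def cong_def)
  have cop: "coprime (4::nat) m" using assms
  proof -
    have "coprime (2::nat) m" using assms by simp
    then have "coprime ((2::nat)^2) m" by (simp only: coprime_power_left_iff) simp
    moreover have "(2::nat)^2 = 4" by simp
    ultimately show ?thesis by metis
  qed
  have "[x = y] (mod 4*m)" using coprime_cong_mult_nat[OF c1 c2 cop] .
  then show "x = y" using x y cong_less_modulus_unique_nat by auto
qed

lemma tau_bij:
  assumes "odd m"
  shows "bij_betw (tau m) {..<4*m} ({..<4} \<times> {..<m})"
proof -
  have mpos: "m > 0" using assms odd_pos by auto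
  have "tau m ` {..<4*m} \<subseteq> {..<4} \<times> {..<m}" using mpos by (auto simp: tau_def)
  moreover have "card (tau m ` {..<4*m}) = card ({..<4::nat} \<times> {..<m})"
    using card_image[OF tau_inj[OF assms]] by (simp add: card_cartesian_product)
  ultimately have "tau m ` {..<4*m} = {..<4} \<times> {..<m}"
    by (simp add: card_subset_eq)
  then show ?thesis using tau_inj[OF assms] by (simp add: bij_betw_def)
qed

lemma autocorr_eq:
  fixes G :: "nat \<Rightarrow> nat \<Rightarrow> complex" and F :: "nat \<Rightarrow> complex"
  assumes "odd m" "x < 4*m" and hG: "\<And>y. y < 4*m \<Longrightarrow> G (y mod 4) (y mod m) = F y"
  shows "autocorr_arr 4 m G (x mod 4) (x mod m) = autocorr_seq (4*m) F x"
proof -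
  have mpos: "m > 0" using assms odd_pos by auto
  define h where "h = (\<lambda>(b1,b2). G b1 b2 * cnj (G ((x mod 4 + b1) mod 4) ((x mod m + b2) mod m)))"
  have "autocorr_arr 4 m G (x mod 4) (x mod m) = sum h ({..<4}\<times>{..<m})"
    unfolding autocorr_arr_def h_def by (simp add: sum.cartesian_product)
  also have "\<dots> = sum (\<lambda>y. h (tau m y)) {..<4*m}"
    using sum.reindex_bij_betw[OF tau_bij[OF assms(1)], of h] by simp
  also have "\<dots> = autocorr_seq (4*m) F x"
    unfolding autocorr_seq_def
  proof (rule sum.cong)
    fix y assume y: "y \<in> {..<4*m}"
    have a1: "(x mod 4 + y mod 4) mod 4 = ((x+y) mod (4*m)) mod 4"
      by (simp add: mod_add_eq mod_mod_cancel)
    have a2: "(x mod m + y mod m) mod m = ((x+y) mod (4*m)) mod m"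
      by (simp add: mod_add_eq mod_mod_cancel)
    have lt: "(x+y) mod (4*m) < 4*m" using mpos by simp
    show "h (tau m y) = F y * cnj (F ((x + y) mod (4*m)))"
      unfolding h_def tau_def using a1 a2 hG[OF lt] hG[of y] y by simp
  qed simp
  finally show ?thesis .
qed

theorem lemma1:
  fixes m :: nat and f :: "nat \<Rightarrow> complex"
  assumes "odd m" and "m > 1" and "binary_seq (2*m) f"
  shows "is_GOBS m f \<longleftrightarrow> is_GOBA_2m_10 m (arr_of_seq m f)"
proof -
  define G where "G = arr_expansion (arr_of_seq m f)"
  define F where "F = seq_expansion m f"
  define R where "R = autocorr_seq (4*m) F"
  define R' where "R' = autocorr_arr 4 m G"
  have hR: "\<And>x. x < 4*m \<Longrightarrow> R' (x mod 4) (x mod m) = R x"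
    unfolding R_def R'_def
    by (rule autocorr_eq[OF assms(1)]) (auto simp: G_def F_def key2[OF assms(1)])
  have bij: "bij_betw (tau m) {..<4*m} ({..<4} \<times> {..<m})" using tau_bij[OF assms(1)] .
  have inj: "inj_on (tau m) {..<4*m}" using tau_inj[OF assms(1)] .
  have surj: "\<exists>x<4*m. x1 = x mod 4 \<and> x2 = x mod m" if "x1 < 4" "x2 < m" for x1 x2 :: nat
  proof -
    have "(x1,x2) \<in> tau m ` {..<4*m}" using bij that by (simp add: bij_betw_def)
    then show ?thesis by (auto simp: tau_def)
  qed
  have mpos: "m > 0" using assms by auto
  have t0: "tau m 0 = (0,0)" by (simp add: tau_def)
  have t2: "tau m (2*m) = (2,0)" using assms(1) by (simp add: tau_def) presburger
  have z0: "x = 0" if "x < 4*m" "x mod 4 = 0" "x mod m = 0" for x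
    using inj_onD[OF inj, of x 0] that t0 mpos by (auto simp: tau_def)
  have z2: "x = 2*m" if "x < 4*m" "x mod 4 = 2" "x mod m = 0" for x
    using inj_onD[OF inj, of x "2*m"] that t2 mpos by (auto simp: tau_def)
  have P1: "(\<forall>x<4*m. x \<noteq> 0 \<and> x \<noteq> 2*m \<longrightarrow> R x \<in> {0, 4, -4}) \<longleftrightarrow>
     (\<forall>x1<4. \<forall>x2<m. (x1, x2) \<notin> {(0,0), (2,0)} \<longrightarrow> R' x1 x2 \<in> {0, 4, -4})"
  proof
    assume H: "\<forall>x<4*m. x \<noteq> 0 \<and> x \<noteq> 2*m \<longrightarrow> R x \<in> {0, 4, -4}"
    show "\<forall>x1<4. \<forall>x2<m. (x1, x2) \<notin> {(0,0), (2,0)} \<longrightarrow> R' x1 x2 \<in> {0, 4, -4}"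
    proof (intro allI impI)
      fix x1 x2 :: nat assume a: "x1 < 4" "x2 < m" "(x1, x2) \<notin> {(0,0), (2,0)}"
      obtain x where x: "x < 4*m" "x1 = x mod 4" "x2 = x mod m" using surj a by blast
      have "x \<noteq> 0"
      proof
        assume "x = 0" then show False using a x by simp
      qed
      moreover have "x \<noteq> 2*m"
      proof
        assume "x = 2*m" then have "tau m x = (2,0)" using t2 by simp
        then show False using a x by (simp add: tau_def)
      qed
      ultimately show "R' x1 x2 \<in> {0, 4, -4}" using H x hR by auto
    qed
  next
    assume H: "\<forall>x1<4. \<forall>x2<m. (x1, x2) \<notin> {(0,0), (2,0)} \<longrightarrow> R' x1 x2 \<in> {0, 4, -4}"
    show "\<forall>x<4*m. x \<noteq> 0 \<and> x \<noteq> 2*m \<longrightarrow> R x \<in> {0, 4, -4}"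
    proof (intro allI impI)
      fix x assume a0: "x < 4*m" and a1: "x \<noteq> 0 \<and> x \<noteq> 2*m"
      have a: "x < 4*m \<and> x \<noteq> 0 \<and> x \<noteq> 2*m" using a0 a1 by simp
      have "(x mod 4, x mod m) \<notin> {(0,0), (2,0)}"
      proof
        assume "(x mod 4, x mod m) \<in> {(0,0), (2,0)}"
        then have "(x mod 4 = 0 \<and> x mod m = 0) \<or> (x mod 4 = 2 \<and> x mod m = 0)" by blast
        then show False using a z0[of x] z2[of x] by auto
      qed
      moreover have "x mod 4 < 4" "x mod m < m" using mpos by auto
      ultimately have "R' (x mod 4) (x mod m) \<in> {0, 4, -4}"
        using H[rule_format, of "x mod 4" "x mod m"] by blast
      then show "R x \<in> {0, 4, -4}" using hR a by simp
    qed
  qed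
  have S: "{(x1, x2). x1 < 4 \<and> x2 < m \<and> R' x1 x2 = 0} = tau m ` {x. x < 4*m \<and> R x = 0}"
  proof
    show "{(x1, x2). x1 < 4 \<and> x2 < m \<and> R' x1 x2 = 0} \<subseteq> tau m ` {x. x < 4*m \<and> R x = 0}"
    proof
      fix p assume "p \<in> {(x1, x2). x1 < 4 \<and> x2 < m \<and> R' x1 x2 = 0}"
      then obtain x1 x2 :: nat where p: "p = (x1,x2)" "x1 < 4" "x2 < m" "R' x1 x2 = 0" by auto
      obtain x where x: "x < 4*m" "x1 = x mod 4" "x2 = x mod m" using surj p by blast
      show "p \<in> tau m ` {x. x < 4*m \<and> R x = 0}"
      proof (rule image_eqI)
        show "p = tau m x" using p x by (simp add: tau_def)
        show "x \<in> {x. x < 4*m \<and> R x = 0}" using p x hR[of x] by simp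
      qed
    qed
  next
    show "tau m ` {x. x < 4*m \<and> R x = 0} \<subseteq> {(x1, x2). x1 < 4 \<and> x2 < m \<and> R' x1 x2 = 0}"
      using hR mpos by (auto simp: tau_def)
  qed
  have C: "card {(x1, x2). x1 < 4 \<and> x2 < m \<and> R' x1 x2 = 0} = card {x. x < 4*m \<and> R x = 0}"
    unfolding S by (rule card_image) (rule inj_on_subset[OF inj], auto)
  show ?thesis
    unfolding is_GOBS_def is_GOBA_2m_10_def
    using P1 C unfolding R_def R'_def F_def G_def by simp
qed

end
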